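(* (i) Let $p_{1}, p_{2}, r \in \mathbb N$ and $m \in \mathbb N_{0}$. Then \begin{align*} T(p_{1},p_{2},m,1,r,1) &=\sum_{i=1}^{m}\frac{(-1)^{m-i}}{r^{m-i+1}}S_{p_{1},p_{2},i}^{+,+,-} +\frac{(-1)^{m+r}}{r^{m}}\left(S_{p_{1},p_{2},1}^{+,+,-}-S_{p_{1},p_{2}+1}^{+,-}-S_{p_{2},p_{1}+1}^{+,-}\right) +\frac{(-1)^{m+r}}{r^{m}}\overline{\zeta}(p_{1}+p_{2}+1)\\ &\quad +\sum_{j=1}^{r-1}\frac{(-1)^{r+m-j}}{r^{m}}S(0,p_{1}+p_{2}+1,1,j,1) +\sum_{j=1}^{r-1}\frac{(-1)^{r+m-1-j}}{r^{m}}\big(S(p_{1},p_{2},1,j,1)+S(p_{2},p_{1},1,j,1)\big)\,. \end{align*} (ii) Let $p_{1}, m, r \in \mathbb N$, $p_{2} \in \mathbb N_{0}$ with $m \geq p_{2}+1$. Then \begin{align*} T(p_{1},-p_{2},m,1,r,1)=\frac{1}{p_{2}+1}\sum_{\ell=0}^{p_{2}} \binom{p_{2}+1}{\ell}B_{\ell}^{+}S(p_{1},m-p_{2}-1+\ell,1,r,1)\,. \end{align*} (iii) Let $m, r \in \mathbb N$, $p_{1}, p_{2} \in \mathbb N_{0}$ with $m \geq p_{1}+p_{2}+2$. Then \begin{align*} T(-p_{1},-p_{2},m,1,r,1)=\frac{1}{(p_{1}+1)(p_{2}+1)}\sum_{\ell_{1}=0}^{p_{1}} \sum_{\ell_{2}=0}^{p_{2}}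 \binom{p_{1}+1}{\ell_{1}}\binom{p_{2}+1}{\ell_{2}}B_{\ell_{1}}^{+}B_{\ell_{2}}^{+}\,S(0,m-p_{1}-p_{2}-1+\ell_{1}+\ell_{2},1,r,1)\,. \end{align*}
   Context: $H_n^{(q)}=\sum_{j=1}^n j^{-q}$ for $q\in\mathbb N$; for an integer $q\ge0$, $H_n^{(-q)}=\sum_{\ell=1}^n\ell^q$ (so $H_n^{(0)}=n$). For $q,q_1,q_2\in\mathbb Z$, $t,r\in\mathbb N$ and integer exponent $m\ge0$: $S(q,m,t,r,1):=\sum_{n=1}^\infty\frac{(-1)^{n+1}H_n^{(q)}}{n^{m}(n+r)^{t}}$ and $T(q_{1},q_{2},m,t,r,1):=\sum_{n=1}^\infty\frac{(-1)^{n+1}H_n^{(q_{1})}H_n^{(q_{2})}}{n^{m}(n+r)^{t}}$. $S_{p,q}^{+,-}:=\sum_{n\ge1}(-1)^{n-1}H_n^{(p)}/n^q$, $S_{p_1,p_2,q}^{+,+,-}:=\sum_{n\ge1}(-1)^{n-1}H_n^{(p_1)}H_n^{(p_2)}/n^q$, $\overline{\zeta}(s)=\sum_{n\ge1}(-1)^{n-1}n^{-s}$. Bernoulli numbers $B_j^{+}$: $\frac{x}{1-e^{-x}}=\sum_{j\ge0}B_j^{+}\frac{x^j}{j!}$. Empty sums are $0$. *)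

theory Defs
  imports "HOL-Analysis.Analysis" "HOL-Computational_Algebra.Formal_Power_Series"
begin

definition genH :: "int \<Rightarrow> nat \<Rightarrow> real" where
  "genH q n = (if 0 < q then (\<Sum>j=1..n. 1 / real j ^ nat q)
               else (\<Sum>l=1..n. real l ^ nat (- q)))"

text \<open>S(q,m,t,r,1)\<close>
definition S1 :: "int \<Rightarrow> nat \<Rightarrow> nat \<Rightarrow> nat \<Rightarrow> real" where
  "S1 q m t r = (\<Sum>k. let n = Suc k in
      (-1) ^ (n + 1) * genH q n / (real n ^ m * (real n + real r) ^ t))"

text \<open>T(q1,q2,m,t,r,1)\<close>
definition T1 :: "int \<Rightarrow> int \<Rightarrow> nat \<Rightarrow> nat \<Rightarrow> nat \<Rightarrow> real" where
  "T1 q1 q2 m t r = (\<Sum>k. let n = Suc k in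
      (-1) ^ (n + 1) * genH q1 n * genH q2 n / (real n ^ m * (real n + real r) ^ t))"

definition Spm :: "nat \<Rightarrow> nat \<Rightarrow> real" where
  "Spm p q = (\<Sum>k. let n = Suc k in (-1) ^ (n - 1) * genH (int p) n / real n ^ q)"

definition Sppm :: "nat \<Rightarrow> nat \<Rightarrow> nat \<Rightarrow> real" where
  "Sppm p1 p2 q = (\<Sum>k. let n = Suc k in
      (-1) ^ (n - 1) * genH (int p1) n * genH (int p2) n / real n ^ q)"

definition zeta_bar :: "nat \<Rightarrow> real" where
  "zeta_bar s = (\<Sum>k. let n = Suc k in (-1) ^ (n - 1) / real n ^ s)"

definition bernoulli_plus :: "nat \<Rightarrow> real" where
  "bernoulli_plus j = fact j * fps_nth (fps_X / (1 - fps_exp (-1)) :: real fps) j"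

end

theory Submission imports Defs "HOL-Real_Asymp.Real_Asymp"
begin

lemma genH_pos: "0 < p \<Longrightarrow> genH (int p) n = (\<Sum>j=1..n. 1 / real j ^ p)"
  by (simp add: genH_def)

lemma genH_zero: "genH 0 n = real n"
  by (simp add: genH_def)

lemma genH_neg: "genH (- int p) n = (\<Sum>l=1..n. real l ^ p)"
  by (simp add: genH_def)

lemma genH_pos_Suc: "0 < p \<Longrightarrow> genH (int p) (Suc n) = genH (int p) n + 1 / real (Suc n) ^ p"
  by (simp add: genH_pos)

lemma genH_pos_0: "0 < p \<Longrightarrow> genH (int p) 0 = 0"
  by (simp add: genH_pos)

lemma genH_pos_nonneg: "0 < p \<Longrightarrow> genH (int p) n \<ge> 0"
  by (simp add: genH_pos sum_nonneg)

lemma genH_pos_ge1: "0 < p \<Longrightarrow> 1 \<le> n \<Longrightarrow> genH (int p) n \<ge> 1"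
proof (induction n)
  case 0 then show ?case by simp
next
  case (Suc n)
  show ?case
  proof (cases "n = 0")
    case True then show ?thesis using Suc by (simp add: genH_pos)
  next
    case False
    have g: "genH (int p) (Suc n) = genH (int p) n + 1 / real (Suc n) ^ p"
      by (rule genH_pos_Suc[OF Suc.prems(1)])
    have "0 \<le> 1 / real (Suc n) ^ p" by simp
    moreover have "1 \<le> genH (int p) n" using Suc False by simp
    ultimately show ?thesis unfolding g by linarith
  qed
qed

lemma genH_pos_le_harm: "0 < p \<Longrightarrow> genH (int p) n \<le> harm n"
  unfolding genH_pos harm_def
proof (intro sum_mono)
  fix j assume "0 < p" "j \<in> {1..n}"
  then have "real j \<le> real j ^ p" using power_increasing[of 1 p "real j"] by simp
  then show "1 / real j ^ p \<le> inverse (real j)" using \<open>j \<in> {1..n}\<close>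
    by (simp add: divide_simps)
qed

lemma genH_1: "genH 1 n = harm n"
  using genH_pos[of 1 n] by (simp add: harm_def divide_inverse)

lemma harm_le_ln: "1 \<le> n \<Longrightarrow> harm n \<le> ln (real n) + 1"
  using euler_mascheroni_sequence_decreasing[of 1 n] by (simp add: harm_def)

definition good :: "(nat \<Rightarrow> real) \<Rightarrow> bool" where
  "good h \<longleftrightarrow> (\<forall>n. 0 \<le> h n) \<and> (\<forall>n. h n \<le> harm n + 1) \<and>
     (\<forall>K>0. \<exists>N. \<forall>n\<ge>N. h (Suc n) \<le> h n * (1 + 1 / (K * (real n + 1))))"

lemma good_one: "good (\<lambda>_. 1)"
  unfolding good_def
  by (auto simp: harm_nonneg intro!: exI[of _ 0])

lemma good_genH: assumes "0 < p" shows "good (genH (int p))"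
  unfolding good_def
proof (intro conjI allI impI)
  fix n show "0 \<le> genH (int p) n" using genH_pos_nonneg[OF assms] .
  show "genH (int p) n \<le> harm n + 1" using genH_pos_le_harm[OF assms, of n] by simp
next
  fix K :: real assume K: "K > 0"
  obtain N1 where N1: "\<forall>n\<ge>N1. harm n \<ge> K"
  proof -
    have "eventually (\<lambda>n. K \<le> harm n) sequentially"
      using harm_at_top by (simp add: filterlim_at_top)
    then show ?thesis using that by (auto simp: eventually_sequentially)
  qed
  obtain N2 :: nat where N2: "real N2 \<ge> K" using real_arch_simple by blast
  show "\<exists>N. \<forall>n\<ge>N. genH (int p) (Suc n) \<le> genH (int p) n * (1 + 1 / (K * (real n + 1)))"
  proof (intro exI[of _ "max 1 (max N1 N2)"] allI impI)
    fix n assume n: "max 1 (max N1 N2) \<le> n"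
    define h where "h = genH (int p) n"
    have h1: "h \<ge> 1" unfolding h_def using genH_pos_ge1[OF assms] n by simp
    have key: "K * (real n + 1) \<le> (real n + 1) ^ p * h"
    proof (cases "p = 1")
      case True
      then have "h = harm n" unfolding h_def using genH_1 by simp
      then have "h \<ge> K" using N1 n by simp
      then show ?thesis using True K by (simp add: mult.commute mult_left_mono)
    next
      case False
      then have "p \<ge> 2" using assms by simp
      have "K * (real n + 1) \<le> (real n + 1) * (real n + 1)"
        using N2 n K by (intro mult_right_mono) auto
      also have "\<dots> = (real n + 1) ^ 2" by (simp add: power2_eq_square)
      also have "\<dots> \<le> (real n + 1) ^ p" by (rule power_increasing[OF \<open>p \<ge> 2\<close>]) simp
      also have "\<dots> \<le> (real n + 1) ^ p * h" using h1 by simp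
      finally show ?thesis .
    qed
    have e: "real (Suc n) = real n + 1" by simp
    have "1 / real (Suc n) ^ p \<le> h / (K * (real n + 1))"
      unfolding e using key K h1 by (simp add: divide_simps mult.commute)
    then show "genH (int p) (Suc n) \<le> genH (int p) n * (1 + 1 / (K * (real n + 1)))"
      unfolding genH_pos_Suc[OF assms] h_def[symmetric] by (simp add: algebra_simps)
  qed
qed

definition G :: "(nat \<Rightarrow> real) \<Rightarrow> (nat \<Rightarrow> real) \<Rightarrow> nat \<Rightarrow> nat \<Rightarrow> nat \<Rightarrow> real" where
  "G h1 h2 e r k = h1 (Suc k) * h2 (Suc k) / (real (Suc k) ^ e * (real (Suc k) + real r))"

lemma step_ineq:
  fixes a b a' b' K x e r :: real
  assumes "0 \<le> a'" "0 \<le> b'" "0 \<le> a" "0 \<le> b" "a' \<le> a * (1 + 1 / (K * x))" "b' \<le> b * (1 + 1 / (K * x))"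
    "K = 4 * r + 4" "x \<ge> 1" "r \<ge> 0" "y \<ge> z" "z \<ge> 1"
  shows "a' * b' / (y * (x + 1 + r)) \<le> a * b / (z * (x + r))"
proof -
  define eps where "eps = 1 / (K * x)"
  have K: "K \<ge> 4" using assms by simp
  have Kx: "K * x \<ge> 4 * 1" by (rule mult_mono) (use K assms in auto)
  have eps0: "0 \<le> eps" "eps \<le> 1" using Kx unfolding eps_def by (auto simp: divide_simps)
  have "a' * b' \<le> (a * (1 + eps)) * (b * (1 + eps))"
    using assms eps0 unfolding eps_def by (intro mult_mono) auto
  also have "\<dots> = a * b * (1 + eps) ^ 2" by (simp add: power2_eq_square algebra_simps)
  also have "\<dots> \<le> a * b * (1 + 3 * eps)"
    using eps0 assms by (intro mult_left_mono) (auto simp: power2_eq_square algebra_simps intro!: mult_right_le_one_le)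
  finally have ab: "a' * b' \<le> a * b * (1 + 3 * eps)" .
  have "r * 1 \<le> r * x" using assms by (intro mult_left_mono) auto
  then have "3 * (x + r) \<le> K * x" using assms by (simp add: algebra_simps)
  then have e3: "(1 + 3 * eps) * (x + r) \<le> x + 1 + r"
    using assms K unfolding eps_def by (simp add: divide_simps algebra_simps)
  show ?thesis
  proof -
    have "a' * b' / (y * (x + 1 + r)) \<le> a * b * (1 + 3 * eps) / (y * (x + 1 + r))"
      using ab assms by (intro divide_right_mono) auto
    also have "\<dots> \<le> a * b * (1 + 3 * eps) / (z * (x + 1 + r))"
      using assms eps0 by (intro divide_left_mono mult_pos_pos mult_right_mono mult_nonneg_nonneg) auto
    also have "\<dots> = (a * b / z) * ((1 + 3 * eps) / (x + 1 + r))" by simp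
    also have "\<dots> \<le> (a * b / z) * (1 / (x + r))"
      using e3 assms by (intro mult_left_mono) (auto simp: divide_simps)
    also have "\<dots> = a * b / (z * (x + r))" by simp
    finally show ?thesis .
  qed
qed

lemma alt_summable_eventually:
  fixes a :: "nat \<Rightarrow> real"
  assumes dec: "\<And>k. k \<ge> N \<Longrightarrow> a (Suc k) \<le> a k" and lim: "a \<longlonglongrightarrow> 0"
  shows "summable (\<lambda>k. (-1) ^ k * a k)"
proof -
  define b where "b j = a (j + N)" for j
  have "decseq b" unfolding b_def by (intro decseq_SucI) (simp add: dec)
  moreover have "b \<longlonglongrightarrow> 0" unfolding b_def using lim by (rule LIMSEQ_ignore_initial_segment)
  ultimately have "summable (\<lambda>j. (-1) ^ j * b j)"
    by (intro summable_Leibniz(1) decseq_imp_monoseq)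
  then have "summable (\<lambda>j. (-1) ^ N * ((-1) ^ j * b j))" by (rule summable_mult)
  then have "summable (\<lambda>j. (-1) ^ (j + N) * a (j + N))"
    unfolding b_def by (simp add: power_add mult_ac)
  then show ?thesis by (subst summable_iff_shift[symmetric, of _ N])
qed

lemma harm_sq_lim: "(\<lambda>k. (ln (real (Suc k)) + 2) ^ 2 / real (Suc k)) \<longlonglongrightarrow> 0"
  by real_asymp

lemma summable_G:
  assumes g1: "good h1" and g2: "good h2"
  shows "summable (\<lambda>k. (-1) ^ k * G h1 h2 e r k)"
proof -
  define K where "K = 4 * real r + 4"
  have K0: "K > 0" unfolding K_def by simp
  obtain N1 where N1: "\<forall>n\<ge>N1. h1 (Suc n) \<le> h1 n * (1 + 1 / (K * (real n + 1)))"
    using g1 K0 unfolding good_def by blast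
  obtain N2 where N2: "\<forall>n\<ge>N2. h2 (Suc n) \<le> h2 n * (1 + 1 / (K * (real n + 1)))"
    using g2 K0 unfolding good_def by blast
  show ?thesis
proof (rule alt_summable_eventually[where N="max N1 N2"])
  fix k assume k: "k \<ge> max N1 N2"
  define n where "n = Suc k"
  have pos: "0 \<le> h1 n" "0 \<le> h2 n" "0 \<le> h1 (Suc n)" "0 \<le> h2 (Suc n)"
    using g1 g2 unfolding good_def by auto
  have ee: "1 / (K * (real n + 1)) \<le> 1 / (K * real n)"
    using K0 by (intro divide_left_mono mult_left_mono mult_pos_pos) (auto simp: n_def)
  have n1: "h1 (Suc n) \<le> h1 n * (1 + 1 / (K * real n))"
  proof -
    have "N1 \<le> n" using k unfolding n_def by simp
    then have "h1 (Suc n) \<le> h1 n * (1 + 1 / (K * (real n + 1)))" using N1 by blast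
    also have "\<dots> \<le> h1 n * (1 + 1 / (K * real n))" using ee pos by (intro mult_left_mono) auto
    finally show ?thesis .
  qed
  have n2: "h2 (Suc n) \<le> h2 n * (1 + 1 / (K * real n))"
  proof -
    have "N2 \<le> n" using k unfolding n_def by simp
    then have "h2 (Suc n) \<le> h2 n * (1 + 1 / (K * (real n + 1)))" using N2 by blast
    also have "\<dots> \<le> h2 n * (1 + 1 / (K * real n))" using ee pos by (intro mult_left_mono) auto
    finally show ?thesis .
  qed
  have "h1 (Suc n) * h2 (Suc n) / (real (Suc n) ^ e * (real n + 1 + real r))
        \<le> h1 n * h2 n / (real n ^ e * (real n + real r))"
    by (rule step_ineq[OF pos(3,4,1,2) n1 n2 K_def]) (auto simp: n_def intro!: power_mono)
  then show "G h1 h2 e r (Suc k) \<le> G h1 h2 e r k"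
    unfolding G_def n_def by (simp add: add_ac)
next
  show "G h1 h2 e r \<longlonglongrightarrow> 0"
  proof (rule real_tendsto_sandwich[OF _ _ tendsto_const harm_sq_lim])
    show "\<forall>\<^sub>F k in sequentially. 0 \<le> G h1 h2 e r k"
      using g1 g2 unfolding good_def G_def by (auto intro!: always_eventually)
    show "\<forall>\<^sub>F k in sequentially. G h1 h2 e r k \<le> (ln (real (Suc k)) + 2) ^ 2 / real (Suc k)"
    proof (intro always_eventually allI)
      fix k
      define n where "n = Suc k"
      have hb: "harm n + 1 \<le> ln (real n) + 2" using harm_le_ln[of n] by (simp add: n_def)
      have a1: "h1 n \<le> ln (real n) + 2" "h2 n \<le> ln (real n) + 2" "0 \<le> h1 n" "0 \<le> h2 n"
        using g1 g2 hb unfolding good_def by (auto intro: order.trans)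
      have "h1 n * h2 n \<le> (ln (real n) + 2) ^ 2"
        unfolding power2_eq_square using a1 by (intro mult_mono) auto
      moreover have "real n \<le> real n ^ e * (real n + real r)"
      proof -
        have "1 \<le> real n ^ e" using n_def by simp
        then have "1 * real n \<le> real n ^ e * (real n + real r)"
          by (intro mult_mono) auto
        then show ?thesis by simp
      qed
      ultimately have "h1 n * h2 n / (real n ^ e * (real n + real r)) \<le> (ln (real n) + 2) ^ 2 / real n"
        using a1 n_def by (intro frac_le) (auto intro!: mult_nonneg_nonneg)
      then show "G h1 h2 e r k \<le> (ln (real (Suc k)) + 2) ^ 2 / real (Suc k)"
        unfolding G_def n_def by simp
    qed
  qed
qed
qed

definition tT :: "int \<Rightarrow> int \<Rightarrow> nat \<Rightarrow> nat \<Rightarrow> nat \<Rightarrow> nat \<Rightarrow> real" where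
  "tT q1 q2 m t r = (\<lambda>k. let n = Suc k in
      (-1) ^ (n + 1) * genH q1 n * genH q2 n / (real n ^ m * (real n + real r) ^ t))"
definition tS :: "int \<Rightarrow> nat \<Rightarrow> nat \<Rightarrow> nat \<Rightarrow> nat \<Rightarrow> real" where
  "tS q m t r = (\<lambda>k. let n = Suc k in
      (-1) ^ (n + 1) * genH q n / (real n ^ m * (real n + real r) ^ t))"
definition tSpm :: "nat \<Rightarrow> nat \<Rightarrow> nat \<Rightarrow> real" where
  "tSpm p q = (\<lambda>k. let n = Suc k in (-1) ^ (n - 1) * genH (int p) n / real n ^ q)"
definition tSppm :: "nat \<Rightarrow> nat \<Rightarrow> nat \<Rightarrow> nat \<Rightarrow> real" where
  "tSppm p1 p2 q = (\<lambda>k. let n = Suc k in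
      (-1) ^ (n - 1) * genH (int p1) n * genH (int p2) n / real n ^ q)"
definition tZ :: "nat \<Rightarrow> nat \<Rightarrow> real" where
  "tZ s = (\<lambda>k. let n = Suc k in (-1) ^ (n - 1) / real n ^ s)"

lemma T1_eq: "T1 q1 q2 m t r = suminf (tT q1 q2 m t r)" by (simp add: T1_def tT_def)
lemma S1_eq: "S1 q m t r = suminf (tS q m t r)" by (simp add: S1_def tS_def)
lemma Spm_eq: "Spm p q = suminf (tSpm p q)" by (simp add: Spm_def tSpm_def)
lemma Sppm_eq: "Sppm p1 p2 q = suminf (tSppm p1 p2 q)" by (simp add: Sppm_def tSppm_def)
lemma zeta_bar_eq: "zeta_bar s = suminf (tZ s)" by (simp add: zeta_bar_def tZ_def)

lemma summable_tT: "0 < p1 \<Longrightarrow> 0 < p2 \<Longrightarrow> summable (tT (int p1) (int p2) m 1 r)"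
proof -
  assume a: "0 < p1" "0 < p2"
  have "tT (int p1) (int p2) m 1 r = (\<lambda>k. (-1) ^ k * G (genH (int p1)) (genH (int p2)) m r k)"
    by (simp add: tT_def G_def fun_eq_iff)
  then show ?thesis using summable_G[OF good_genH good_genH] a by simp
qed

lemma summable_tSppm: "0 < p1 \<Longrightarrow> 0 < p2 \<Longrightarrow> 0 < q \<Longrightarrow> summable (tSppm p1 p2 q)"
proof -
  assume a: "0 < p1" "0 < p2" "0 < q"
  then obtain q' where q: "q = Suc q'" by (cases q) auto
  have "tSppm p1 p2 q = (\<lambda>k. (-1) ^ k * G (genH (int p1)) (genH (int p2)) q' 0 k)"
    by (simp add: tSppm_def G_def fun_eq_iff q mult_ac)
  then show ?thesis using summable_G[OF good_genH good_genH] a by simp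
qed

lemma summable_tSpm: "0 < p \<Longrightarrow> 0 < q \<Longrightarrow> summable (tSpm p q)"
proof -
  assume a: "0 < p" "0 < q"
  then obtain q' where q: "q = Suc q'" by (cases q) auto
  have "tSpm p q = (\<lambda>k. (-1) ^ k * G (genH (int p)) (\<lambda>_. 1) q' 0 k)"
    by (simp add: tSpm_def G_def fun_eq_iff q mult_ac)
  then show ?thesis using summable_G[OF good_genH good_one] a by simp
qed

lemma summable_tZ: "0 < q \<Longrightarrow> summable (tZ q)"
proof -
  assume a: "0 < q"
  then obtain q' where q: "q = Suc q'" by (cases q) auto
  have "tZ q = (\<lambda>k. (-1) ^ k * G (\<lambda>_. 1) (\<lambda>_. 1) q' 0 k)"
    by (simp add: tZ_def G_def fun_eq_iff q mult_ac)
  then show ?thesis using summable_G[OF good_one good_one] by simp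
qed

lemma summable_tS_pos: "0 < p \<Longrightarrow> summable (tS (int p) e 1 r)"
proof -
  assume a: "0 < p"
  have "tS (int p) e 1 r = (\<lambda>k. (-1) ^ k * G (genH (int p)) (\<lambda>_. 1) e r k)"
    by (simp add: tS_def G_def fun_eq_iff)
  then show ?thesis using summable_G[OF good_genH good_one] a by simp
qed

lemma summable_tS_zero: "0 < e \<Longrightarrow> summable (tS 0 e 1 r)"
proof -
  assume a: "0 < e"
  then obtain e' where q: "e = Suc e'" by (cases e) auto
  have "tS 0 e 1 r = (\<lambda>k. (-1) ^ k * G (\<lambda>_. 1) (\<lambda>_. 1) e' r k)"
    by (simp add: tS_def G_def fun_eq_iff q genH_zero divide_simps del: of_nat_Suc)
  then show ?thesis using summable_G[OF good_one good_one] by simp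
qed

lemma partial_frac:
  fixes x r :: real assumes x: "x > 0" and r: "r > 0"
  shows "1 / (x ^ m * (x + r)) =
    (\<Sum>i=1..m. (-1) ^ (m - i) / r ^ (m - i + 1) * (1 / x ^ i)) + (-1) ^ m / r ^ m * (1 / (x + r))"
proof (induction m)
  case 0 then show ?case by simp
next
  case (Suc m)
  have "(\<Sum>i=1..Suc m. (-1) ^ (Suc m - i) / r ^ (Suc m - i + 1) * (1 / x ^ i))
      = (-1) ^ m / r ^ (Suc m) * (1 / x) +
        (\<Sum>i=Suc 1..Suc m. (-1) ^ (Suc m - i) / r ^ (Suc m - i + 1) * (1 / x ^ i))"
    by (subst sum.atLeast_Suc_atMost) auto
  also have "(\<Sum>i=Suc 1..Suc m. (-1) ^ (Suc m - i) / r ^ (Suc m - i + 1) * (1 / x ^ i))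
      = (\<Sum>i=1..m. (-1) ^ (m - i) / r ^ (m - i + 1) * (1 / x ^ Suc i))"
    by (subst sum.shift_bounds_cl_Suc_ivl) simp
  also have "\<dots> = (1 / x) * (\<Sum>i=1..m. (-1) ^ (m - i) / r ^ (m - i + 1) * (1 / x ^ i))"
    by (simp add: sum_distrib_left mult_ac)
  finally have e1: "(\<Sum>i=1..Suc m. (-1) ^ (Suc m - i) / r ^ (Suc m - i + 1) * (1 / x ^ i))
     = (-1) ^ m / r ^ (Suc m) * (1 / x) + (1 / x) * (\<Sum>i=1..m. (-1) ^ (m - i) / r ^ (m - i + 1) * (1 / x ^ i))" .
  have "1 / (x ^ Suc m * (x + r)) = (1 / x) * (1 / (x ^ m * (x + r)))" by simp
  also have "\<dots> = (1 / x) * ((\<Sum>i=1..m. (-1) ^ (m - i) / r ^ (m - i + 1) * (1 / x ^ i)) + (-1) ^ m / r ^ m * (1 / (x + r)))"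
    using Suc by simp
  also have "\<dots> = (1 / x) * (\<Sum>i=1..m. (-1) ^ (m - i) / r ^ (m - i + 1) * (1 / x ^ i))
      + (-1) ^ m / r ^ m * (1 / (x * (x + r)))"
    by (simp add: algebra_simps)
  also have "1 / (x * (x + r)) = (1 / r) * (1 / x) - (1 / r) * (1 / (x + r))"
    using x r by (simp add: divide_simps add_pos_pos)
  also have "(1 / x) * (\<Sum>i=1..m. (-1) ^ (m - i) / r ^ (m - i + 1) * (1 / x ^ i))
      + (-1) ^ m / r ^ m * ((1 / r) * (1 / x) - (1 / r) * (1 / (x + r))) =
      (1 / x) * (\<Sum>i=1..m. (-1) ^ (m - i) / r ^ (m - i + 1) * (1 / x ^ i))
      + (-1) ^ m / r ^ (Suc m) * (1 / x) + (-1) ^ Suc m / r ^ Suc m * (1 / (x + r))"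
    by (simp add: algebra_simps)
  finally show ?case unfolding e1 by simp
qed

lemma sumfin_suminf:
  fixes f :: "'i \<Rightarrow> nat \<Rightarrow> real"
  assumes "\<And>i. i \<in> I \<Longrightarrow> summable (f i)"
  shows "summable (\<lambda>k. \<Sum>i\<in>I. c i * f i k) \<and> (\<Sum>k. \<Sum>i\<in>I. c i * f i k) = (\<Sum>i\<in>I. c i * suminf (f i))"
proof -
  have s: "\<And>i. i \<in> I \<Longrightarrow> summable (\<lambda>k. c i * f i k)" using assms by (intro summable_mult)
  show ?thesis
    using suminf_sum[of I "\<lambda>i k. c i * f i k", OF s] summable_sum[of I "\<lambda>i k. c i * f i k", OF s]
      suminf_mult[OF assms] by simp
qed

lemma T1_partial:
  assumes "0 < p1" "0 < p2" "0 < r"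
  shows "T1 (int p1) (int p2) m 1 r =
     (\<Sum>i=1..m. (-1) ^ (m - i) / real r ^ (m - i + 1) * Sppm p1 p2 i)
     + (-1) ^ m / real r ^ m * T1 (int p1) (int p2) 0 1 r"
proof -
  let ?c = "\<lambda>i. (-1) ^ (m - i) / real r ^ (m - i + 1) :: real"
  have pt: "tT (int p1) (int p2) m 1 r k = (\<Sum>i=1..m. ?c i * tSppm p1 p2 i k)
     + (-1) ^ m / real r ^ m * tT (int p1) (int p2) 0 1 r k" for k
  proof -
    define x where "x = real (Suc k)"
    define P where "P = (-1) ^ (Suc k + 1) * genH (int p1) (Suc k) * genH (int p2) (Suc k)"
    have x: "x > 0" unfolding x_def by simp
    have "tT (int p1) (int p2) m 1 r k = P * (1 / (x ^ m * (x + real r)))"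
      unfolding tT_def P_def x_def by (simp add: Let_def)
    also have "\<dots> = P * ((\<Sum>i=1..m. ?c i * (1 / x ^ i)) + (-1) ^ m / real r ^ m * (1 / (x + real r)))"
      using partial_frac[OF x, of "real r" m] assms by simp
    also have "\<dots> = (\<Sum>i=1..m. ?c i * (P / x ^ i)) + (-1) ^ m / real r ^ m * (P / (x + real r))"
      by (simp add: algebra_simps sum_distrib_left)
    also have "\<dots> = (\<Sum>i=1..m. ?c i * tSppm p1 p2 i k) + (-1) ^ m / real r ^ m * tT (int p1) (int p2) 0 1 r k"
      unfolding tSppm_def tT_def P_def x_def by (simp add: Let_def)
    finally show ?thesis .
  qed
  have s1: "summable (\<lambda>k. \<Sum>i\<in>{1..m}. ?c i * tSppm p1 p2 i k) \<and>
      (\<Sum>k. \<Sum>i\<in>{1..m}. ?c i * tSppm p1 p2 i k) = (\<Sum>i\<in>{1..m}. ?c i * suminf (tSppm p1 p2 i))"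
    by (rule sumfin_suminf) (use assms in \<open>auto intro: summable_tSppm\<close>)
  have s2: "summable (\<lambda>k. (-1) ^ m / real r ^ m * tT (int p1) (int p2) 0 1 r k)"
    using summable_tT[OF assms(1,2)] by (rule summable_mult)
  have "T1 (int p1) (int p2) m 1 r = (\<Sum>k. (\<Sum>i=1..m. ?c i * tSppm p1 p2 i k)
     + (-1) ^ m / real r ^ m * tT (int p1) (int p2) 0 1 r k)"
    unfolding T1_eq pt ..
  also have "\<dots> = (\<Sum>k. \<Sum>i=1..m. ?c i * tSppm p1 p2 i k) + (\<Sum>k. (-1) ^ m / real r ^ m * tT (int p1) (int p2) 0 1 r k)"
    using s1 s2 by (intro suminf_add[symmetric]) auto
  also have "\<dots> = (\<Sum>i=1..m. ?c i * Sppm p1 p2 i) + (-1) ^ m / real r ^ m * T1 (int p1) (int p2) 0 1 r"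
  proof -
    have a: "(\<Sum>k. (-1) ^ m / real r ^ m * tT (int p1) (int p2) 0 1 r k) = (-1) ^ m / real r ^ m * suminf (tT (int p1) (int p2) 0 1 r)"
      by (rule suminf_mult[OF summable_tT[OF assms(1,2)]])
    show ?thesis unfolding a s1[THEN conjunct2] by (simp only: Sppm_eq T1_eq)
  qed
  finally show ?thesis .
qed

lemma alg_shift:
  fixes x d s a b :: real
  assumes "x > 0" "d > 0"
  shows "- s * (a - 1 / x ^ p) * (b - 1 / x ^ q) / d =
     - (s * a * b / (1 * d ^ 1)) + s * a / (x ^ q * d ^ 1) + s * b / (x ^ p * d ^ 1)
     - s * x / (x ^ (p + q + 1) * d ^ 1)"
  using assms by (simp add: field_simps power_add)

lemma A_rec:
  assumes p: "0 < p1" "0 < p2"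
  shows "T1 (int p1) (int p2) 0 1 (Suc r) = - T1 (int p1) (int p2) 0 1 r
     + S1 (int p1) p2 1 r + S1 (int p2) p1 1 r - S1 0 (p1 + p2 + 1) 1 r"
proof -
  define c where "c k = (-1) ^ (k + 1) * genH (int p1) k * genH (int p2) k / (real k + real (Suc r))" for k
  have cS: "c (Suc k) = tT (int p1) (int p2) 0 1 (Suc r) k" for k
    unfolding c_def tT_def by (simp add: Let_def)
  have c0: "c 0 = 0" unfolding c_def using p by (simp add: genH_pos_0)
  have ceq: "c k = - tT (int p1) (int p2) 0 1 r k + tS (int p1) p2 1 r k + tS (int p2) p1 1 r k
     - tS 0 (p1 + p2 + 1) 1 r k" for k
  proof -
    define x where "x = real (Suc k)"
    have x: "x > 0" unfolding x_def by simp
    have g1: "genH (int p1) k = genH (int p1) (Suc k) - 1 / x ^ p1"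
      using genH_pos_Suc[OF p(1), of k] unfolding x_def by simp
    have g2: "genH (int p2) k = genH (int p2) (Suc k) - 1 / x ^ p2"
      using genH_pos_Suc[OF p(2), of k] unfolding x_def by simp
    have d: "real k + real (Suc r) = x + real r" unfolding x_def by simp
    have sg: "(-1) ^ (k + 1) = - ((-1) ^ (Suc k + 1) :: real)" by simp
    have "c k = - ((-1) ^ (Suc k + 1)) * (genH (int p1) (Suc k) - 1 / x ^ p1) * (genH (int p2) (Suc k) - 1 / x ^ p2) / (x + real r)"
      unfolding c_def g1 g2 d sg by simp
    also have "\<dots> = - ((-1) ^ (Suc k + 1) * genH (int p1) (Suc k) * genH (int p2) (Suc k) / (1 * (x + real r) ^ 1))
       + (-1) ^ (Suc k + 1) * genH (int p1) (Suc k) / (x ^ p2 * (x + real r) ^ 1)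
       + (-1) ^ (Suc k + 1) * genH (int p2) (Suc k) / (x ^ p1 * (x + real r) ^ 1)
       - (-1) ^ (Suc k + 1) * x / (x ^ (p1 + p2 + 1) * (x + real r) ^ 1)"
      by (rule alg_shift) (use x in auto)
    also have "\<dots> = - tT (int p1) (int p2) 0 1 r k + tS (int p1) p2 1 r k + tS (int p2) p1 1 r k
     - tS 0 (p1 + p2 + 1) 1 r k"
      unfolding tT_def tS_def x_def by (simp add: Let_def genH_zero)
    finally show ?thesis .
  qed
  have sT: "summable (tT (int p1) (int p2) 0 1 r)" by (rule summable_tT[OF p])
  have sA: "summable (tS (int p1) p2 1 r)" by (rule summable_tS_pos[OF p(1)])
  have sB: "summable (tS (int p2) p1 1 r)" by (rule summable_tS_pos[OF p(2)])
  have sC: "summable (tS 0 (p1 + p2 + 1) 1 r)" by (rule summable_tS_zero) simp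
  have sumc: "c sums (- suminf (tT (int p1) (int p2) 0 1 r) + suminf (tS (int p1) p2 1 r)
      + suminf (tS (int p2) p1 1 r) - suminf (tS 0 (p1 + p2 + 1) 1 r))"
    unfolding ceq[abs_def]
    by (intro sums_add sums_diff sums_minus summable_sums sT sA sB sC)
  have "T1 (int p1) (int p2) 0 1 (Suc r) = (\<Sum>k. c (Suc k))" unfolding T1_eq cS ..
  also have "\<dots> = suminf c - c 0" using sumc by (intro suminf_split_head) (rule sums_summable)
  also have "\<dots> = - T1 (int p1) (int p2) 0 1 r + S1 (int p1) p2 1 r + S1 (int p2) p1 1 r - S1 0 (p1 + p2 + 1) 1 r"
    using sumc c0 unfolding T1_eq S1_eq by (simp add: sums_iff)
  finally show ?thesis .
qed

lemma A_closed:
  assumes p: "0 < p1" "0 < p2"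
  shows "T1 (int p1) (int p2) 0 1 r = (-1) ^ r * T1 (int p1) (int p2) 0 1 0 +
     (\<Sum>j<r. (-1) ^ (r - 1 - j) * (S1 (int p1) p2 1 j + S1 (int p2) p1 1 j - S1 0 (p1 + p2 + 1) 1 j))"
proof (induction r)
  case 0 then show ?case by simp
next
  case (Suc r)
  define D where "D j = S1 (int p1) p2 1 j + S1 (int p2) p1 1 j - S1 0 (p1 + p2 + 1) 1 j" for j
  have "(\<Sum>j<r. (-1) ^ (Suc r - 1 - j) * D j) = - (\<Sum>j<r. (-1) ^ (r - 1 - j) * D j)"
    unfolding sum_negf[symmetric]
  proof (intro sum.cong refl)
    fix j assume "j \<in> {..<r}"
    then have "Suc r - 1 - j = Suc (r - 1 - j)" by auto
    then show "(-1) ^ (Suc r - 1 - j) * D j = - ((-1) ^ (r - 1 - j) * D j)" by simp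
  qed
  then show ?case
    using Suc A_rec[OF p, of r] unfolding D_def[symmetric] by (simp add: D_def)
qed

lemma A0: "T1 (int p1) (int p2) 0 1 0 = Sppm p1 p2 1"
  unfolding T1_def Sppm_def by simp

lemma S1_0_pos: "S1 (int p) q 1 0 = Spm p (q + 1)"
  unfolding S1_def Spm_def by (simp add: mult_ac)

lemma S1_0_zero: "0 < s \<Longrightarrow> S1 0 s 1 0 = zeta_bar s"
  unfolding S1_def zeta_bar_def
proof (intro arg_cong[where f=suminf] ext)
  fix k
  have "real (Suc k) \<noteq> 0" by simp
  then show "(let n = Suc k in (-1) ^ (n + 1) * genH 0 n / (real n ^ s * (real n + real 0) ^ 1)) =
    (let n = Suc k in (-1) ^ (n - 1) / real n ^ s)"
    unfolding Let_def genH_zero by (simp del: of_nat_Suc)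
qed

lemma part1:
  assumes p: "p1 \<ge> 1" "p2 \<ge> 1" and r: "r \<ge> 1"
  shows "T1 (int p1) (int p2) m 1 r =
       (\<Sum>i=1..m. (-1) ^ (m - i) / real r ^ (m - i + 1) * Sppm p1 p2 i)
     + (-1) ^ (m + r) / real r ^ m * (Sppm p1 p2 1 - Spm p1 (p2 + 1) - Spm p2 (p1 + 1))
     + (-1) ^ (m + r) / real r ^ m * zeta_bar (p1 + p2 + 1)
     + (\<Sum>j=1..r-1. (-1) ^ (r + m - j) / real r ^ m * S1 0 (p1 + p2 + 1) 1 j)
     + (\<Sum>j=1..r-1. (-1) ^ (r + m - 1 - j) / real r ^ m
          * (S1 (int p1) p2 1 j + S1 (int p2) p1 1 j))"
proof -
  have p': "0 < p1" "0 < p2" using p by auto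
  obtain r' where r': "r = Suc r'" using r by (cases r) auto
  define D where "D j = S1 (int p1) p2 1 j + S1 (int p2) p1 1 j - S1 0 (p1 + p2 + 1) 1 j" for j
  define C where "C = (-1) ^ m / real r ^ m"
  define Z where "Z = zeta_bar (p1 + p2 + 1)"
  define X where "X = Spm p1 (p2 + 1) + Spm p2 (p1 + 1)"
  have D0: "D 0 = X - Z"
    unfolding D_def X_def Z_def S1_0_pos by (subst S1_0_zero) auto
  have A: "T1 (int p1) (int p2) 0 1 r = (-1) ^ r * Sppm p1 p2 1 + (-1) ^ r' * (X - Z)
      + (\<Sum>j<r'. (-1) ^ (r' - Suc j) * D (Suc j))"
  proof -
    have "(\<Sum>j<Suc r'. (-1) ^ (Suc r' - 1 - j) * D j) = (-1) ^ r' * D 0 + (\<Sum>j<r'. (-1) ^ (r' - Suc j) * D (Suc j))"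
      by (subst sum.lessThan_Suc_shift) simp
    then show ?thesis using A_closed[OF p', of r] unfolding A0 D_def[symmetric] D0 r' by simp
  qed
  have pw: "C * ((-1) ^ (r' - Suc j) * D (Suc j)) =
      (-1) ^ (r + m - Suc j) / real r ^ m * S1 0 (p1 + p2 + 1) 1 (Suc j)
      + (-1) ^ (r + m - 1 - Suc j) / real r ^ m * (S1 (int p1) p2 1 (Suc j) + S1 (int p2) p1 1 (Suc j))"
    if "j < r'" for j
  proof -
    have e1: "r + m - Suc j = Suc (m + (r' - Suc j))" and e2: "r + m - 1 - Suc j = m + (r' - Suc j)"
      using that r' by auto
    show ?thesis unfolding e1 e2 C_def D_def by (simp add: power_add divide_inverse algebra_simps)
  qed
  have sums: "C * (\<Sum>j<r'. (-1) ^ (r' - Suc j) * D (Suc j)) =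
      (\<Sum>j=1..r-1. (-1) ^ (r + m - j) / real r ^ m * S1 0 (p1 + p2 + 1) 1 j)
     + (\<Sum>j=1..r-1. (-1) ^ (r + m - 1 - j) / real r ^ m * (S1 (int p1) p2 1 j + S1 (int p2) p1 1 j))"
  proof -
    have sh: "(\<Sum>j=1..n. f j) = (\<Sum>j<n. f (Suc j))" for n and f :: "nat \<Rightarrow> real"
      using sum.atLeast1_atMost_eq[of f n] by simp
    have rr: "r - 1 = r'" using r' by simp
    show ?thesis unfolding sum_distrib_left rr sh sum.distrib[symmetric]
      apply (rule sum.cong[OF refl])
      apply (erule pw[OF lessThan_iff[THEN iffD1]])
      done
  qed
  have "T1 (int p1) (int p2) m 1 r = (\<Sum>i=1..m. (-1) ^ (m - i) / real r ^ (m - i + 1) * Sppm p1 p2 i)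
     + C * T1 (int p1) (int p2) 0 1 r"
    unfolding C_def by (rule T1_partial[OF p']) (use r in simp)
  also have "\<dots> = (\<Sum>i=1..m. (-1) ^ (m - i) / real r ^ (m - i + 1) * Sppm p1 p2 i)
     + C * ((-1) ^ r * Sppm p1 p2 1 + (-1) ^ r' * (X - Z))
     + C * (\<Sum>j<r'. (-1) ^ (r' - Suc j) * D (Suc j))"
    unfolding A by (simp only: distrib_left add.assoc)
  also have "C * ((-1) ^ r * Sppm p1 p2 1 + (-1) ^ r' * (X - Z)) =
     (-1) ^ (m + r) / real r ^ m * (Sppm p1 p2 1 - Spm p1 (p2 + 1) - Spm p2 (p1 + 1))
     + (-1) ^ (m + r) / real r ^ m * zeta_bar (p1 + p2 + 1)"
    unfolding C_def X_def Z_def r' by (simp add: power_add divide_inverse algebra_simps)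
  finally show ?thesis unfolding sums by (simp only: add.assoc)
qed

lemma fps_B_times: "(fps_X / (1 - fps_exp (-1)) :: real fps) * (1 - fps_exp (-1)) = fps_X"
proof (rule fps_times_divide_eq)
  have "fps_nth (1 - fps_exp (-1) :: real fps) 1 = 1" by simp
  then show "(1 - fps_exp (-1) :: real fps) \<noteq> 0" by auto
  have "subdegree (1 - fps_exp (-1) :: real fps) \<le> 1"
    by (rule subdegree_leI) simp
  then show "subdegree (1 - fps_exp (-1) :: real fps) \<le> subdegree (fps_X :: real fps)" by simp
qed

lemma fps_sum_exp_times: "(\<Sum>k=1..n. fps_exp (real k)) * (1 - fps_exp (-1)) = fps_exp (real n) - (1 :: real fps)"
proof (induction n)
  case 0 then show ?case by simp
next
  case (Suc n)
  have "fps_exp (real (Suc n)) * fps_exp (-1) = (fps_exp (real n) :: real fps)"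
    by (simp add: fps_exp_add_mult[symmetric])
  then show ?case using Suc by (simp add: algebra_simps)
qed

lemma fps_exp_minus1: "fps_exp (real n) - (1 :: real fps) = fps_X * Abs_fps (\<lambda>j. real n ^ (j + 1) / fact (j + 1))"
proof (rule fps_ext)
  fix k show "fps_nth (fps_exp (real n) - (1 :: real fps)) k = fps_nth (fps_X * Abs_fps (\<lambda>j. real n ^ (j + 1) / fact (j + 1))) k"
    by (cases k) (simp_all add: algebra_simps)
qed

lemma faul_alg:
  fixes s a F c b N :: real
  assumes "s \<noteq> 0" "a \<noteq> 0" "F \<noteq> 0"
  shows "c * (b / a * (N / F)) = 1 / s * ((s * c) / (a * F) * b * N)"
  using assms by (simp add: field_simps)

lemma faulhaber:
  "(\<Sum>l=1..n. real l ^ p) = 1 / real (p + 1) *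
     (\<Sum>i=0..p. real ((p + 1) choose i) * bernoulli_plus i * real n ^ (p + 1 - i))"
proof -
  define D :: "real fps" where "D = 1 - fps_exp (-1)"
  define B :: "real fps" where "B = fps_X / D"
  define Q :: "real fps" where "Q = Abs_fps (\<lambda>j. real n ^ (j + 1) / fact (j + 1))"
  have D0: "D \<noteq> 0"
  proof -
    have "fps_nth D 1 = 1" unfolding D_def by simp
    then show ?thesis by auto
  qed
  have "(\<Sum>k=1..n. fps_exp (real k)) * D = B * Q * D"
    unfolding D_def B_def Q_def fps_sum_exp_times fps_exp_minus1
    using fps_B_times by (simp add: mult_ac)
  then have eq: "(\<Sum>k=1..n. fps_exp (real k)) = B * Q" using D0 by simp
  have Bn: "fps_nth B i = bernoulli_plus i / fact i" for i
    unfolding bernoulli_plus_def B_def D_def by simp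
  have "fps_nth (\<Sum>k=1..n. fps_exp (real k)) p = (\<Sum>l=1..n. real l ^ p) / fact p"
    by (simp add: fps_sum_nth sum_divide_distrib of_nat_fact)
  also have "fps_nth (\<Sum>k=1..n. fps_exp (real k)) p = (\<Sum>i=0..p. fps_nth B i * fps_nth Q (p - i))"
    unfolding eq fps_mult_nth ..
  finally have "(\<Sum>l=1..n. real l ^ p) = fact p * (\<Sum>i=0..p. fps_nth B i * fps_nth Q (p - i))"
    by (simp add: field_simps)
  also have "\<dots> = (\<Sum>i=0..p. 1 / real (p + 1) * (real ((p + 1) choose i) * bernoulli_plus i * real n ^ (p + 1 - i)))"
    unfolding sum_distrib_left
  proof (intro sum.cong refl)
    fix i assume i: "i \<in> {0..p}"
    then obtain j where j: "p = i + j" by (metis atLeastAtMost_iff le_add_diff_inverse)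
    have e1: "p - i = j" "p + 1 - i = j + 1" using j by auto
    have c: "real ((p + 1) choose i) = (real (p + 1) * fact p) / (fact i * fact (p + 1 - i))"
      using binomial_fact[of i "p + 1"] i by (simp add: e1)
    show "fact p * (fps_nth B i * fps_nth Q (p - i)) = 1 / real (p + 1) * (real ((p + 1) choose i) * bernoulli_plus i * real n ^ (p + 1 - i))"
      unfolding Bn Q_def c fps_nth_Abs_fps e1
      by (rule faul_alg) auto
  qed
  finally show ?thesis by (simp add: sum_distrib_left)
qed


lemma pow_shift1:
  fixes x s H d :: real
  assumes "x \<noteq> 0" "a + e = m"
  shows "s * H * x ^ a / (x ^ m * d) = s * H / (x ^ e * d)"
proof -
  have "x ^ m = x ^ a * x ^ e" using assms(2) power_add[of x a e] by simp
  then show ?thesis using assms(1) by (simp add: divide_simps)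
qed

lemma pow_shift2_aux:
  fixes x s d :: real
  assumes "x \<noteq> 0" "a + e = m + 1"
  shows "s * x ^ a / (x ^ m * d) = s * x / (x ^ e * d)"
proof -
  have "x ^ m * x = x ^ a * x ^ e" using assms(2) by (simp add: power_add[symmetric])
  then show ?thesis using assms(1) by (simp add: divide_simps) (metis mult.commute mult.left_commute)
qed

lemma pow_shift2:
  fixes x s d :: real
  assumes "x \<noteq> 0" "a1 + a2 + e = m + 1"
  shows "s * (x ^ a1 * x ^ a2) / (x ^ m * d) = s * x / (x ^ e * d)"
proof -
  define a where "a = a1 + a2"
  have "x ^ a1 * x ^ a2 = x ^ a" unfolding a_def by (simp add: power_add)
  moreover have "a + e = m + 1" using assms(2) unfolding a_def by simp
  ultimately show ?thesis using assms(1) pow_shift2_aux by metis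
qed

lemma part2:
  assumes "p1 \<ge> 1" "m \<ge> 1" "r \<ge> 1" "m \<ge> p2 + 1"
  shows "T1 (int p1) (- int p2) m 1 r =
       1 / real (p2 + 1) * (\<Sum>l=0..p2. real ((p2 + 1) choose l) * bernoulli_plus l
          * S1 (int p1) (m - p2 - 1 + l) 1 r)"
proof -
  define c where "c l = 1 / real (p2 + 1) * (real ((p2 + 1) choose l) * bernoulli_plus l)" for l
  have pt: "tT (int p1) (- int p2) m 1 r k = (\<Sum>l\<in>{0..p2}. c l * tS (int p1) (m - p2 - 1 + l) 1 r k)" for k
  proof -
    define x where "x = real (Suc k)"
    define s where "s = ((-1) ^ (Suc k + 1) :: real)"
    define H where "H = genH (int p1) (Suc k)"
    have x0: "x \<noteq> 0" unfolding x_def by simp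
    have "tT (int p1) (- int p2) m 1 r k = s * H * genH (- int p2) (Suc k) / (x ^ m * (x + real r))"
      unfolding tT_def s_def H_def x_def by (simp add: Let_def)
    also have "genH (- int p2) (Suc k) = (\<Sum>l=0..p2. c l * x ^ (p2 + 1 - l))"
      unfolding genH_neg faulhaber c_def x_def sum_distrib_left by (simp add: mult_ac)
    also have "s * H * (\<Sum>l=0..p2. c l * x ^ (p2 + 1 - l)) / (x ^ m * (x + real r))
       = (\<Sum>l=0..p2. c l * (s * H * x ^ (p2 + 1 - l) / (x ^ m * (x + real r))))"
      by (simp add: sum_distrib_left sum_divide_distrib mult_ac)
    also have "\<dots> = (\<Sum>l=0..p2. c l * (s * H / (x ^ (m - p2 - 1 + l) * (x + real r))))"
      by (intro sum.cong refl arg_cong2[where f="(*)"] pow_shift1[OF x0]) (use assms in auto)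
    also have "\<dots> = (\<Sum>l\<in>{0..p2}. c l * tS (int p1) (m - p2 - 1 + l) 1 r k)"
      unfolding tS_def s_def H_def x_def by (simp add: Let_def)
    finally show ?thesis .
  qed
  have ss: "summable (\<lambda>k. \<Sum>l\<in>{0..p2}. c l * tS (int p1) (m - p2 - 1 + l) 1 r k) \<and>
     (\<Sum>k. \<Sum>l\<in>{0..p2}. c l * tS (int p1) (m - p2 - 1 + l) 1 r k) = (\<Sum>l\<in>{0..p2}. c l * suminf (tS (int p1) (m - p2 - 1 + l) 1 r))"
    by (rule sumfin_suminf, rule summable_tS_pos) (use assms in auto)
  have "T1 (int p1) (- int p2) m 1 r = (\<Sum>l\<in>{0..p2}. c l * S1 (int p1) (m - p2 - 1 + l) 1 r)"
    unfolding T1_eq pt ss[THEN conjunct2] S1_eq ..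
  also have "\<dots> = 1 / real (p2 + 1) * (\<Sum>l=0..p2. real ((p2 + 1) choose l) * bernoulli_plus l
          * S1 (int p1) (m - p2 - 1 + l) 1 r)"
    unfolding c_def sum_distrib_left by (simp add: mult_ac)
  finally show ?thesis .
qed

lemma sumfin2_suminf:
  fixes f :: "nat \<Rightarrow> nat \<Rightarrow> nat \<Rightarrow> real"
  assumes "\<And>i j. i \<in> I \<Longrightarrow> j \<in> J \<Longrightarrow> summable (f i j)" "finite I" "finite J"
  shows "(\<Sum>k. \<Sum>i\<in>I. \<Sum>j\<in>J. c i j * f i j k) = (\<Sum>i\<in>I. \<Sum>j\<in>J. c i j * suminf (f i j))"
proof -
  have "(\<Sum>k. \<Sum>i\<in>I. \<Sum>j\<in>J. c i j * f i j k) = (\<Sum>k. \<Sum>ij\<in>I \<times> J. c (fst ij) (snd ij) * f (fst ij) (snd ij) k)"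
    using assms(2,3) by (simp add: sum.cartesian_product case_prod_beta)
  also have "\<dots> = (\<Sum>ij\<in>I \<times> J. c (fst ij) (snd ij) * suminf (f (fst ij) (snd ij)))"
    using sumfin_suminf[of "I \<times> J" "\<lambda>ij. f (fst ij) (snd ij)" "\<lambda>ij. c (fst ij) (snd ij)"] assms(1)
    by auto
  also have "\<dots> = (\<Sum>i\<in>I. \<Sum>j\<in>J. c i j * suminf (f i j))"
    using assms(2,3) by (simp add: sum.cartesian_product case_prod_beta)
  finally show ?thesis .
qed

lemma part3:
  assumes "m \<ge> 1" "r \<ge> 1" "m \<ge> p1 + p2 + 2"
  shows "T1 (- int p1) (- int p2) m 1 r =
       1 / (real (p1 + 1) * real (p2 + 1)) *
         (\<Sum>l1=0..p1. \<Sum>l2=0..p2. real ((p1 + 1) choose l1) * real ((p2 + 1) choose l2)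
            * bernoulli_plus l1 * bernoulli_plus l2
            * S1 0 (m - p1 - p2 - 1 + l1 + l2) 1 r)"
proof -
  define c1 where "c1 l = 1 / real (p1 + 1) * (real ((p1 + 1) choose l) * bernoulli_plus l)" for l
  define c2 where "c2 l = 1 / real (p2 + 1) * (real ((p2 + 1) choose l) * bernoulli_plus l)" for l
  define e where "e l1 l2 = m - p1 - p2 - 1 + l1 + l2" for l1 l2
  have pt: "tT (- int p1) (- int p2) m 1 r k =
     (\<Sum>l1\<in>{0..p1}. \<Sum>l2\<in>{0..p2}. (c1 l1 * c2 l2) * tS 0 (e l1 l2) 1 r k)" for k
  proof -
    define x where "x = real (Suc k)"
    define s where "s = ((-1) ^ (Suc k + 1) :: real)"
    have x0: "x \<noteq> 0" unfolding x_def by simp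
    have g1: "genH (- int p1) (Suc k) = (\<Sum>l=0..p1. c1 l * x ^ (p1 + 1 - l))"
      unfolding genH_neg faulhaber c1_def x_def sum_distrib_left by (simp add: mult_ac)
    have g2: "genH (- int p2) (Suc k) = (\<Sum>l=0..p2. c2 l * x ^ (p2 + 1 - l))"
      unfolding genH_neg faulhaber c2_def x_def sum_distrib_left by (simp add: mult_ac)
    have "tT (- int p1) (- int p2) m 1 r k = s * (genH (- int p1) (Suc k) * genH (- int p2) (Suc k)) / (x ^ m * (x + real r))"
      unfolding tT_def s_def x_def by (simp add: Let_def mult_ac)
    also have "\<dots> = (\<Sum>l1\<in>{0..p1}. \<Sum>l2\<in>{0..p2}. (c1 l1 * c2 l2) * (s * (x ^ (p1 + 1 - l1) * x ^ (p2 + 1 - l2)) / (x ^ m * (x + real r))))"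
      unfolding g1 g2
      apply (subst sum_product)
      unfolding sum_distrib_left sum_divide_distrib
      by (rule sum.cong[OF refl], rule sum.cong[OF refl]) (simp add: mult_ac)
    also have "\<dots> = (\<Sum>l1\<in>{0..p1}. \<Sum>l2\<in>{0..p2}. (c1 l1 * c2 l2) * (s * x / (x ^ (e l1 l2) * (x + real r))))"
      by (intro sum.cong refl arg_cong2[where f="(*)"] pow_shift2[OF x0]) (use assms in \<open>auto simp: e_def\<close>)
    also have "\<dots> = (\<Sum>l1\<in>{0..p1}. \<Sum>l2\<in>{0..p2}. (c1 l1 * c2 l2) * tS 0 (e l1 l2) 1 r k)"
      unfolding tS_def s_def x_def by (simp add: Let_def genH_zero)
    finally show ?thesis .
  qed
  have "T1 (- int p1) (- int p2) m 1 r = (\<Sum>l1\<in>{0..p1}. \<Sum>l2\<in>{0..p2}. (c1 l1 * c2 l2) * suminf (tS 0 (e l1 l2) 1 r))"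
    unfolding T1_eq pt
    by (rule sumfin2_suminf, rule summable_tS_zero) (use assms in \<open>auto simp: e_def\<close>)
  also have "\<dots> = 1 / (real (p1 + 1) * real (p2 + 1)) *
         (\<Sum>l1=0..p1. \<Sum>l2=0..p2. real ((p1 + 1) choose l1) * real ((p2 + 1) choose l2)
            * bernoulli_plus l1 * bernoulli_plus l2
            * S1 0 (m - p1 - p2 - 1 + l1 + l2) 1 r)"
    unfolding c1_def c2_def e_def sum_distrib_left S1_eq by (simp add: mult_ac)
  finally show ?thesis .
qed

theorem lemma10:
  shows
  "(\<forall>p1 p2 r m. p1 \<ge> 1 \<longrightarrow> p2 \<ge> 1 \<longrightarrow> r \<ge> 1 \<longrightarrow>
     T1 (int p1) (int p2) m 1 r =
       (\<Sum>i=1..m. (-1) ^ (m - i) / real r ^ (m - i + 1) * Sppm p1 p2 i)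
     + (-1) ^ (m + r) / real r ^ m * (Sppm p1 p2 1 - Spm p1 (p2 + 1) - Spm p2 (p1 + 1))
     + (-1) ^ (m + r) / real r ^ m * zeta_bar (p1 + p2 + 1)
     + (\<Sum>j=1..r-1. (-1) ^ (r + m - j) / real r ^ m * S1 0 (p1 + p2 + 1) 1 j)
     + (\<Sum>j=1..r-1. (-1) ^ (r + m - 1 - j) / real r ^ m
          * (S1 (int p1) p2 1 j + S1 (int p2) p1 1 j)))
  \<and>
  (\<forall>p1 p2 m r. p1 \<ge> 1 \<longrightarrow> m \<ge> 1 \<longrightarrow> r \<ge> 1 \<longrightarrow> m \<ge> p2 + 1 \<longrightarrow>
     T1 (int p1) (- int p2) m 1 r =
       1 / real (p2 + 1) * (\<Sum>l=0..p2. real ((p2 + 1) choose l) * bernoulli_plus l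
          * S1 (int p1) (m - p2 - 1 + l) 1 r))
  \<and>
  (\<forall>p1 p2 m r. m \<ge> 1 \<longrightarrow> r \<ge> 1 \<longrightarrow> m \<ge> p1 + p2 + 2 \<longrightarrow>
     T1 (- int p1) (- int p2) m 1 r =
       1 / (real (p1 + 1) * real (p2 + 1)) *
         (\<Sum>l1=0..p1. \<Sum>l2=0..p2. real ((p1 + 1) choose l1) * real ((p2 + 1) choose l2)
            * bernoulli_plus l1 * bernoulli_plus l2
            * S1 0 (m - p1 - p2 - 1 + l1 + l2) 1 r))"
  using part1 part2 part3 by blast

end
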